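(* The $K$-linear map $\Phi:H\to (K\oplus KY)^{2g+1}$, $\Phi(m_c)=\big(b^{\lambda_i}_{0,0}+Y\,b^{\lambda_i}_{1,0}\big)_{i=1,\dots,2g+1}$, which records the constant terms of the local components of $m_c$ at the finite points $\lambda_1,\dots,\lambda_{2g+1}$, is injective.
   Context: Standing setup. Let $k$ be a finite field of odd characteristic $p$, $W(k)$ its ring of Witt vectors, $K$ the fraction field of $W(k)$, $|\cdot|$ the $p$-adic absolute value. Let $g\ge1$ and let $\lambda_1,\dots,\lambda_{2g+1}\in W(k)$ have pairwise distinct reductions modulo $p$. Put $Q(t)=\prod_{i=1}^{2g+1}(t-\lambda_i)$ and $h(t)=\frac{Q'(t)}{2Q(t)}$. Let $\Lambda=\{\lambda_1,\dots,\lambda_{2g+1},\infty\}$, $\Lambda_0=\Lambda\setminus\{\infty\}$. The local parameter at $\lambda\in\Lambda_0$ is $s_\lambda=t-\lambda$, and at $\infty$ it is $s_\infty=t^{-1}$. Let $B_K^\dagger$ be the ring of series $\sum_{\underline\ell\ge0}a_{\underline\ell}\,t^{\ell_0}\prod_{i}(t-\lambda_i)^{-\ell_i}$ ($a_{\underline\ell}\in K$) for which there is $\eta>1$ with $|a_{\underline\ell}|\eta^{\max_i\ell_i}\to0$; $\phi_\lambda(f)$ is the Laurent expansion of $f\in B_K^\dagger$ in $s_\lambda$. The principal part is $\Pr_\lambda(\sum a_\ell s_\lambda^\ell)=\sum_{\ell<0}a_\ell s_\lambda^\ell$ for $\lambda\in\Lambda_0$ and $\Pr_\infty(\sum a_\ell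 s_\infty^\ell)=\sum_{\ell\le0}a_\ell s_\infty^\ell$; its expansion at another point $\mu$ is denoted $\phi_\mu(\cdot)$. For $\lambda\in\Lambda_0$, $\tilde R_{\lambda,c}$ is the space of $\sum_{\ell\ge0}a_\ell s_\lambda^\ell$ with $|a_\ell|\eta^\ell\to0$ for all $\eta<1$, and $R_{\infty,c}$ the analogous space of $\sum_{\ell\ge1}a_\ell s_\infty^\ell$. $B_c=\prod_{\lambda\in\Lambda_0}\tilde R_{\lambda,c}\times R_{\infty,c}$ is a $B_K^\dagger$-module via $(f\cdot G)^\mu=\phi_\mu(f)G^\mu-\sum_{\lambda\in\Lambda}\phi_\mu\big(\Pr_\lambda(\phi_\lambda(f)G^\lambda)\big)$. Let $A_K^\dagger=B_K^\dagger\oplus B_K^\dagger Y$ with $Y^2=Q(t)$, $\nabla_{GM}(1)=0$, $\nabla_{GM}(Y)=hY$; $M_c=A_K^\dagger\otimes_{B_K^\dagger}B_c$ with elements $m_c=1\otimes G_0+Y\otimes G_1$ ($G_0,G_1\in B_c$) and $\nabla_c(m_c)=1\otimes\partial_tG_0+Y\otimes(\partial_tG_1+h\cdot G_1)$, $\partial_t$ acting componentwise (as $-s_\infty^2\,d/ds_\infty$ on series in $s_\infty$). $H=\ker\nabla_c$ (the space $H^1_{MW,c}(V,\pi_*A_K^\dagger)$). Local components: $m_\lambda=G_0^\lambda+YG_1^\lambda=\sum_{j=0,1}Y^j\sum_{\ell\ge0}b^\lambda_{j,\ell}s_\lambda^\ell$ with $b^\infty_{j,0}=0$. *)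

theory Defs
  imports "HOL-Analysis.Analysis" "HOL-Computational_Algebra.Polynomial"
begin

text \<open>K is modelled abstractly as a field of characteristic 0 with an absolute value
  absv that is: a non-archimedean absolute value, normalised by absv p = 1/p, with value
  group p^Z (so p is a uniformiser: discretely valued and absolutely unramified), complete,
  and with finite residue field. For an odd prime p these conditions characterise
  K = W(k)[1/p] for the finite field k (the residue field) up to isometric isomorphism;
  W(k) is the unit ball.\<close>

definition padic_setting :: "nat \<Rightarrow> ('a::field_char_0 \<Rightarrow> real) \<Rightarrow> bool" where
  "padic_setting p absv \<longleftrightarrow>
     prime p \<and> odd p \<and>
     (\<forall>x. absv x \<ge> 0) \<and> (\<forall>x. absv x = 0 \<longleftrightarrow> x = 0) \<and>
     (\<forall>x y. absv (x * y) = absv x * absv y) \<and>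
     (\<forall>x y. absv (x + y) \<le> max (absv x) (absv y)) \<and>
     absv (of_nat p) = 1 / real p \<and>
     (\<forall>x. x \<noteq> 0 \<longrightarrow> (\<exists>n::int. absv x = real p powr (of_int n))) \<and>
     (\<forall>X::nat \<Rightarrow> 'a. (\<forall>e>0. \<exists>N. \<forall>m\<ge>N. \<forall>n\<ge>N. absv (X m - X n) < e) \<longrightarrow>
          (\<exists>L. \<forall>e>0. \<exists>N. \<forall>n\<ge>N. absv (X n - L) < e)) \<and>
     (\<exists>S. finite S \<and> S \<subseteq> {x. absv x \<le> 1} \<and>
          (\<forall>x. absv x \<le> 1 \<longrightarrow> (\<exists>s\<in>S. absv (x - s) < 1)))"

text \<open>The points of Lambda: Fin i stands for lambda_i (i = 1..2g+1), Infty for infinity.\<close>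
datatype pt = Fin nat | Infty

definition Lam :: "nat \<Rightarrow> pt set" where
  "Lam g = Fin ` {1..2*g+1} \<union> {Infty}"

text \<open>A Laurent series in the local parameter s_mu is given by its coefficient
  function int => K (coefficient of s^l).\<close>
type_synonym 'a lser = "int \<Rightarrow> 'a"

definition lbounded :: "'a::zero lser \<Rightarrow> bool" where
  "lbounded f \<longleftrightarrow> (\<exists>N::int. \<forall>l<N. f l = 0)"

text \<open>Cauchy product (finite sums for series with bounded-below support).\<close>
definition lmul :: "'a::comm_ring_1 lser \<Rightarrow> 'a lser \<Rightarrow> 'a lser" where
  "lmul f g l = (\<Sum>m\<in>{m. f m \<noteq> 0 \<and> g (l - m) \<noteq> 0}. f m * g (l - m))"

fun ptval :: "(nat \<Rightarrow> 'a) \<Rightarrow> pt \<Rightarrow> 'a::zero" where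
  "ptval lam (Fin i) = lam i"
| "ptval lam Infty = 0"

text \<open>Laurent expansion phi_mu of a polynomial P(t): at a finite point the
  expansion in s = t - mu, at infinity the expansion in s = 1/t.\<close>
fun poly_exp :: "(nat \<Rightarrow> 'a) \<Rightarrow> pt \<Rightarrow> 'a::comm_ring_1 poly \<Rightarrow> 'a lser" where
  "poly_exp lam (Fin i) P l = (if l < 0 then 0 else coeff (pcompose P [:lam i, 1:]) (nat l))"
| "poly_exp lam Infty P l = (if l > 0 then 0 else coeff P (nat (- l)))"

text \<open>Q(t) = prod (t - lambda_i), and phi_mu(h) for h = Q'/(2Q): the unique
  Laurent series L with phi_mu(2Q) * L = phi_mu(Q').\<close>
definition Qpoly :: "nat \<Rightarrow> (nat \<Rightarrow> 'a) \<Rightarrow> 'a::comm_ring_1 poly" where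
  "Qpoly g lam = (\<Prod>i\<in>{1..2*g+1}. [:- lam i, 1:])"

definition h_exp :: "nat \<Rightarrow> (nat \<Rightarrow> 'a) \<Rightarrow> pt \<Rightarrow> 'a::field_char_0 lser" where
  "h_exp g lam mu = (THE L. lbounded L \<and>
      lmul (poly_exp lam mu (smult 2 (Qpoly g lam))) L = poly_exp lam mu (pderiv (Qpoly g lam)))"

fun prin :: "pt \<Rightarrow> 'a::zero lser \<Rightarrow> 'a lser" where
  "prin (Fin i) f l = (if l < 0 then f l else 0)"
| "prin Infty f l = (if l \<le> 0 then f l else 0)"

text \<open>Expansion at mu of a principal part P taken at lambda (a rational function:
  sum_k P(-k) (t - lambda)^(-k) for finite lambda, sum_k P(-k) t^k for lambda = infinity).\<close>
fun pp_exp :: "(nat \<Rightarrow> 'a) \<Rightarrow> pt \<Rightarrow> pt \<Rightarrow> 'a::field lser \<Rightarrow> 'a lser" where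
  "pp_exp lam (Fin i) (Fin j) P l =
     (if i = j then P l
      else if l < 0 then 0
      else (\<Sum>k\<in>{k::nat. 1 \<le> k \<and> P (- int k) \<noteq> 0}.
              P (- int k) * (-1) ^ nat l * of_nat ((k + nat l - 1) choose (nat l))
                * inverse ((lam j - lam i) ^ (k + nat l))))"
| "pp_exp lam (Fin i) Infty P l =
     (if l < 1 then 0
      else (\<Sum>k\<in>{k::nat. 1 \<le> k \<and> k \<le> nat l \<and> P (- int k) \<noteq> 0}.
              P (- int k) * of_nat ((nat l - 1) choose (nat l - k)) * (lam i) ^ (nat l - k)))"
| "pp_exp lam Infty (Fin j) P l =
     (if l < 0 then 0
      else (\<Sum>k\<in>{k::nat. P (- int k) \<noteq> 0}.
              P (- int k) * of_nat (k choose (nat l)) * (lam j) ^ (k - nat l)))"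
| "pp_exp lam Infty Infty P l = P l"

definition growth_ok :: "('a \<Rightarrow> real) \<Rightarrow> 'a lser \<Rightarrow> bool" where
  "growth_ok absv a \<longleftrightarrow>
     (\<forall>eta::real. 0 < eta \<and> eta < 1 \<longrightarrow> ((\<lambda>n::nat. absv (a (int n)) * eta ^ n) \<longlonglongrightarrow> 0))"

text \<open>Elements of B_c: a family of local series indexed by the points of Lambda
  (zero outside Lambda), power series at finite points, series in s_infty without
  constant term at infinity, converging on the open unit disc.\<close>
definition Bc :: "('a::zero \<Rightarrow> real) \<Rightarrow> nat \<Rightarrow> (pt \<Rightarrow> 'a lser) set" where
  "Bc absv g = {G. (\<forall>mu. mu \<notin> Lam g \<longrightarrow> G mu = (\<lambda>_. 0)) \<and>
      (\<forall>i\<in>{1..2*g+1}. (\<forall>l<0. G (Fin i) l = 0) \<and> growth_ok absv (G (Fin i))) \<and>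
      (\<forall>l\<le>0. G Infty l = 0) \<and> growth_ok absv (G Infty)}"

text \<open>Module action (f . G)^mu = phi_mu(f) G^mu - sum_lambda phi_mu(Pr_lambda(phi_lambda(f) G^lambda)),
  for f given by its family of expansions phi.\<close>
definition act :: "nat \<Rightarrow> (nat \<Rightarrow> 'a) \<Rightarrow> (pt \<Rightarrow> 'a::field lser) \<Rightarrow> (pt \<Rightarrow> 'a lser) \<Rightarrow> pt \<Rightarrow> 'a lser" where
  "act g lam phi G mu l =
     (if mu \<in> Lam g then
        lmul (phi mu) (G mu) l - (\<Sum>la\<in>Lam g. pp_exp lam la mu (prin la (lmul (phi la) (G la))) l)
      else 0)"

text \<open>d/dt on local series: d/ds at finite points, -s^2 d/ds at infinity.\<close>
fun dt :: "pt \<Rightarrow> 'a::comm_ring_1 lser \<Rightarrow> 'a lser" where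
  "dt (Fin i) a l = of_int (l + 1) * a (l + 1)"
| "dt Infty a l = - (of_int (l - 1) * a (l - 1))"

text \<open>nabla_c(1 (x) G0 + Y (x) G1) = 1 (x) d_t G0 + Y (x) (d_t G1 + h . G1).\<close>
definition nabla_c :: "nat \<Rightarrow> (nat \<Rightarrow> 'a) \<Rightarrow> (pt \<Rightarrow> 'a::field_char_0 lser) \<times> (pt \<Rightarrow> 'a lser)
     \<Rightarrow> (pt \<Rightarrow> 'a lser) \<times> (pt \<Rightarrow> 'a lser)" where
  "nabla_c g lam m = (\<lambda>mu l. dt mu (fst m mu) l,
                      \<lambda>mu l. dt mu (snd m mu) l + act g lam (h_exp g lam) (snd m) mu l)"

text \<open>H = ker nabla_c, elements m_c = 1 (x) G0 + Y (x) G1 represented as pairs (G0, G1).\<close>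
definition Hc :: "('a::field_char_0 \<Rightarrow> real) \<Rightarrow> nat \<Rightarrow> (nat \<Rightarrow> 'a)
     \<Rightarrow> ((pt \<Rightarrow> 'a lser) \<times> (pt \<Rightarrow> 'a lser)) set" where
  "Hc absv g lam = {m. fst m \<in> Bc absv g \<and> snd m \<in> Bc absv g \<and>
                       nabla_c g lam m = ((\<lambda>_ _. 0), (\<lambda>_ _. 0))}"

text \<open>Phi(m_c) = (b_{0,0}^{lambda_i} + Y b_{1,0}^{lambda_i})_i, an element of (K + KY)^{2g+1}
  represented as pairs indexed by i in 1..2g+1 (and (0,0) elsewhere).\<close>
definition Phi :: "nat \<Rightarrow> (pt \<Rightarrow> 'a::zero lser) \<times> (pt \<Rightarrow> 'a lser) \<Rightarrow> nat \<Rightarrow> 'a \<times> 'a" where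
  "Phi g m = (\<lambda>i. if i \<in> {1..2*g+1} then (fst m (Fin i) 0, snd m (Fin i) 0) else (0, 0))"

end

theory Submission
  imports Defs "HOL-Computational_Algebra.Formal_Laurent_Series"
begin


lemma Abs_lb: assumes "\<forall>l<N. f l = 0" shows "fls_nth (Abs_fls f) n = f n"
proof (rule nth_Abs_fls_ex_nat_lower_bound)
  show "\<exists>m. \<forall>n>m. f (- int n) = 0"
    using assms by (intro exI[of _ "nat (- N)"]) auto
qed

lemma lmul_interval:
  fixes f g :: "'a::comm_ring_1 lser"
  assumes "\<forall>m<a. f m = 0" "\<forall>m<c. g m = 0"
  shows "lmul f g l = (\<Sum>m\<in>{a..l-c}. f m * g (l-m))"
  unfolding lmul_def
proof (rule sum.mono_neutral_left)
  show "{m. f m \<noteq> 0 \<and> g (l - m) \<noteq> 0} \<subseteq> {a..l - c}"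
  proof
    fix m assume m: "m \<in> {m. f m \<noteq> 0 \<and> g (l - m) \<noteq> 0}"
    then have "\<not> m < a" "\<not> l - m < c" using assms by auto
    then show "m \<in> {a..l - c}" by auto
  qed
qed auto

lemma lmul_fls:
  fixes f g :: "'a::field lser"
  assumes fa: "\<forall>m<a. f m = 0" and gc: "\<forall>m<c. g m = 0"
  shows "lmul f g l = fls_nth (Abs_fls f * Abs_fls g) l"
proof -
  define F where "F = Abs_fls f"
  define G where "G = Abs_fls g"
  have Fn: "\<And>n. fls_nth F n = f n" unfolding F_def by (rule Abs_lb[OF fa])
  have Gn: "\<And>n. fls_nth G n = g n" unfolding G_def by (rule Abs_lb[OF gc])
  show ?thesis
  proof (cases "F = 0 \<or> G = 0")
    case True
    then have "f = (\<lambda>_. 0) \<or> g = (\<lambda>_. 0)" using Fn Gn by auto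
    then show ?thesis using True by (auto simp: lmul_def F_def[symmetric] G_def[symmetric])
  next
    case False
    have aF: "a \<le> fls_subdegree F" using False fa Fn by (intro fls_subdegree_geI) auto
    have cG: "c \<le> fls_subdegree G" using False gc Gn by (intro fls_subdegree_geI) auto
    have "fls_nth (F * G) l = (\<Sum>i=fls_subdegree F..l - fls_subdegree G. fls_nth F i * fls_nth G (l - i))"
      by (rule fls_times_nth(2))
    also have "\<dots> = (\<Sum>i=a..l - c. fls_nth F i * fls_nth G (l - i))"
    proof (rule sum.mono_neutral_left)
      show "{fls_subdegree F..l - fls_subdegree G} \<subseteq> {a..l - c}" using aF cG by auto
      show "\<forall>i\<in>{a..l - c} - {fls_subdegree F..l - fls_subdegree G}. fls_nth F i * fls_nth G (l - i) = 0"
      proof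
        fix i assume "i \<in> {a..l - c} - {fls_subdegree F..l - fls_subdegree G}"
        then have "i < fls_subdegree F \<or> l - i < fls_subdegree G" by auto
        then show "fls_nth F i * fls_nth G (l - i) = 0" by auto
      qed
    qed auto
    finally show ?thesis using lmul_interval[OF fa gc] Fn Gn by (simp add: F_def G_def)
  qed
qed

lemma lb_nth: "\<exists>N. \<forall>l<N. fls_nth F l = 0"
  by (cases "F = 0") (auto intro: exI[of _ "fls_subdegree F"])

lemma THE_div:
  fixes A B :: "'a::field lser"
  assumes A: "\<forall>m<a. A m = 0" and B: "\<forall>m<b. B m = 0" and Anz: "Abs_fls A \<noteq> 0"
  shows "(THE L. lbounded L \<and> lmul A L = B) = fls_nth (Abs_fls B / Abs_fls A)"
proof (rule the_equality)
  define Q where "Q = Abs_fls B / Abs_fls A"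
  obtain N where N: "\<forall>l<N. fls_nth Q l = 0" using lb_nth by blast
  have "Abs_fls (fls_nth Q) = Q" by (rule fls_nth_inverse)
  have "lmul A (fls_nth Q) l = B l" for l
    using lmul_fls[OF A N, of l] Anz Abs_lb[OF B]
    by (simp add: fls_nth_inverse Q_def)
  then show "lbounded (fls_nth Q) \<and> lmul A (fls_nth Q) = B"
    using N by (auto simp: lbounded_def)
next
  fix L assume L: "lbounded L \<and> lmul A L = B"
  then obtain N where N: "\<forall>l<N. L l = 0" by (auto simp: lbounded_def)
  have "Abs_fls A * Abs_fls L = Abs_fls B"
    by (rule fls_eqI) (metis L lmul_fls[OF A N] Abs_lb[OF B])
  then have "Abs_fls L = Abs_fls B / Abs_fls A" using Anz by (simp add: field_simps)
  then have "fls_nth (Abs_fls L) = fls_nth (Abs_fls B / Abs_fls A)" by simp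
  moreover have "fls_nth (Abs_fls L) = L" using Abs_lb[OF N] by auto
  ultimately show "L = fls_nth (Abs_fls B / Abs_fls A)" by simp
qed



lemma coeff_pc0: "coeff (pcompose P [:a, 1:]) 0 = poly P (a::'a::idom)"
  by (simp add: poly_0_coeff_0[symmetric] poly_pcompose)

lemma coeff_pc1: "coeff (pcompose P [:a, 1:]) 1 = poly (pderiv P) (a::'a::idom)"
proof -
  have "coeff (pcompose P [:a, 1:]) 1 = coeff (pderiv (pcompose P [:a, 1:])) 0"
    by (simp add: coeff_pderiv)
  also have "\<dots> = poly (pderiv (pcompose P [:a, 1:])) 0" by (simp add: poly_0_coeff_0)
  also have "\<dots> = poly (pderiv P) a"
    by (simp add: pderiv_pcompose poly_pcompose pderiv_pCons)
  finally show ?thesis .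
qed

lemma Q_root: "i \<in> {1..2*g+1} \<Longrightarrow> poly (Qpoly g lam) (lam i) = (0::'a::comm_ring_1)"
  unfolding Qpoly_def poly_prod
  by (rule prod_zero) auto

lemma Qd_root:
  fixes lam :: "nat \<Rightarrow> 'a::idom"
  assumes D: "\<forall>i\<in>{1..2*g+1}. \<forall>j\<in>{1..2*g+1}. i \<noteq> j \<longrightarrow> lam i \<noteq> lam j"
    and i: "i \<in> {1..2*g+1}"
  shows "poly (pderiv (Qpoly g lam)) (lam i) \<noteq> 0"
proof -
  define R where "R = (\<Prod>j\<in>{1..2*g+1} - {i}. [:- lam j, 1:])"
  have Q: "Qpoly g lam = [:- lam i, 1:] * R"
    unfolding Qpoly_def R_def using i by (intro prod.remove) auto
  have "poly (pderiv (Qpoly g lam)) (lam i) = poly R (lam i)"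
    unfolding Q pderiv_mult by (simp add: pderiv_pCons)
  also have "\<dots> = (\<Prod>j\<in>{1..2*g+1} - {i}. lam i - lam j)"
    unfolding R_def poly_prod by simp
  also have "\<dots> \<noteq> 0" using D i by (auto simp: prod_zero_iff)
  finally show ?thesis .
qed

lemma Q_deg: "degree (Qpoly g (lam :: nat \<Rightarrow> 'a::idom)) = 2*g+1"
  unfolding Qpoly_def by (subst degree_prod_eq_sum_degree) auto

lemma Q_lead: "coeff (Qpoly g (lam :: nat \<Rightarrow> 'a::idom)) (2*g+1) = 1"
proof -
  have "lead_coeff (Qpoly g lam) = 1"
    unfolding Qpoly_def lead_coeff_prod by simp
  then show ?thesis by (simp add: Q_deg)
qed

lemma Qd_deg: "degree (pderiv (Qpoly g (lam :: nat \<Rightarrow> 'a::{idom,ring_char_0}))) = 2*g"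
  by (simp add: degree_pderiv Q_deg)

lemma Qd_lead: "coeff (pderiv (Qpoly g (lam :: nat \<Rightarrow> 'a::{idom,ring_char_0}))) (2*g) = of_nat (2*g+1)"
  using coeff_pderiv[of "Qpoly g lam" "2*g"] Q_lead[of g lam] by simp

lemma Abs_subdeg:
  assumes "\<forall>l<d. f l = 0" "f d \<noteq> 0"
  shows "fls_subdegree (Abs_fls f) = d" "Abs_fls f \<noteq> 0"
  using Abs_lb[OF assms(1)] assms by (auto intro!: fls_subdegree_eqI fls_nonzeroI)

lemma h_fin:
  fixes lam :: "nat \<Rightarrow> 'a::field_char_0"
  assumes D: "\<forall>i\<in>{1..2*g+1}. \<forall>j\<in>{1..2*g+1}. i \<noteq> j \<longrightarrow> lam i \<noteq> lam j"
    and i: "i \<in> {1..2*g+1}"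
  shows "\<forall>l< -1. h_exp g lam (Fin i) l = 0" "h_exp g lam (Fin i) (-1) = 1/2"
proof -
  define Q where "Q = Qpoly g lam"
  define c where "c = poly (pderiv Q) (lam i)"
  have c: "c \<noteq> 0" unfolding c_def Q_def by (rule Qd_root[OF D i])
  define A where "A = poly_exp lam (Fin i) (smult 2 Q)"
  define B where "B = poly_exp lam (Fin i) (pderiv Q)"
  have A0: "\<forall>l<1. A l = 0"
  proof (intro allI impI)
    fix l :: int assume "l < 1"
    then have "l < 0 \<or> l = 0" by auto
    then show "A l = 0"
      using Q_root[OF i, of lam] by (auto simp: A_def Q_def coeff_pc0)
  qed
  have A1: "A 1 = 2 * c" by (simp add: A_def coeff_pc1[simplified] pderiv_smult c_def)
  have B0: "\<forall>l<0. B l = 0" by (simp add: B_def)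
  have B00: "B 0 = c" by (simp add: B_def coeff_pc0 c_def)
  have sA: "fls_subdegree (Abs_fls A) = 1" "Abs_fls A \<noteq> 0"
    using Abs_subdeg[OF A0] A1 c by auto
  have sB: "fls_subdegree (Abs_fls B) = 0" "Abs_fls B \<noteq> 0"
    using Abs_subdeg[OF B0] B00 c by auto
  have h: "h_exp g lam (Fin i) = fls_nth (Abs_fls B / Abs_fls A)"
    unfolding h_exp_def A_def[symmetric] B_def[symmetric] Q_def[symmetric]
    by (rule THE_div[OF A0 B0 sA(2)])
  show "\<forall>l< -1. h_exp g lam (Fin i) l = 0"
    using fls_divide_nth_below[of _ "Abs_fls B" "Abs_fls A"] sA sB h by auto
  show "h_exp g lam (Fin i) (-1) = 1/2"
    using fls_divide_nth_base[of "Abs_fls B" "Abs_fls A"] sA sB h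
      Abs_lb[OF A0, of 1] Abs_lb[OF B0, of 0] A1 B00 c by simp
qed

lemma h_inf:
  fixes lam :: "nat \<Rightarrow> 'a::field_char_0"
  shows "\<forall>l<1. h_exp g lam Infty l = 0" "h_exp g lam Infty 1 = of_nat (2*g+1) / 2"
proof -
  define Q where "Q = Qpoly g lam"
  define A where "A = poly_exp lam Infty (smult 2 Q)"
  define B where "B = poly_exp lam Infty (pderiv Q)"
  have A0: "\<forall>l< -int (2*g+1). A l = 0"
  proof (intro allI impI)
    fix l :: int assume "l < - int (2*g+1)"
    then have "nat (-l) > degree (smult 2 Q)" using Q_deg[of g lam] by (simp add: Q_def)
    then show "A l = 0" by (simp add: A_def coeff_eq_0)
  qed
  have e: "nat (- (- int (2*g+1))) = 2*g+1" by simp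
  have ne: "\<not> (- int (2*g+1) > 0)" by simp
  have "A (- int (2*g+1)) = coeff (smult 2 Q) (2*g+1)"
    unfolding A_def poly_exp.simps if_not_P[OF ne] e ..
  then have A1: "A (- int (2*g+1)) = 2" using Q_lead[of g lam] by (simp only: coeff_smult Q_def) simp
  have B0: "\<forall>l< -int (2*g). B l = 0"
  proof (intro allI impI)
    fix l :: int assume "l < - int (2*g)"
    then have "nat (-l) > degree (pderiv Q)" using Qd_deg[of g lam] by (simp add: Q_def)
    then show "B l = 0" by (simp add: B_def coeff_eq_0)
  qed
  have e2: "nat (- (- int (2*g))) = 2*g" by simp
  have ne2: "\<not> (- int (2*g) > 0)" by simp
  have B1: "B (- int (2*g)) = of_nat (2*g+1)"
    unfolding B_def poly_exp.simps if_not_P[OF ne2] e2 Q_def by (rule Qd_lead)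
  have sA: "fls_subdegree (Abs_fls A) = - int (2*g+1)" "Abs_fls A \<noteq> 0"
    using Abs_subdeg[OF A0] A1 by auto
  have nz: "(of_nat (2*g+1) :: 'a) \<noteq> 0" by (simp only: of_nat_eq_0_iff)
  have sB: "fls_subdegree (Abs_fls B) = - int (2*g)" "Abs_fls B \<noteq> 0"
    using Abs_subdeg[OF B0] B1 nz by auto
  have h: "h_exp g lam Infty = fls_nth (Abs_fls B / Abs_fls A)"
    unfolding h_exp_def A_def[symmetric] B_def[symmetric] Q_def[symmetric]
    by (rule THE_div[OF A0 B0 sA(2)])
  show "\<forall>l<1. h_exp g lam Infty l = 0"
    using fls_divide_nth_below[of _ "Abs_fls B" "Abs_fls A"] sA sB h by auto
  have "fls_nth (Abs_fls B / Abs_fls A) 1 = B (- int (2*g)) / A (- int (2*g+1))"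
    using fls_divide_nth_base[of "Abs_fls B" "Abs_fls A"] sA sB
      Abs_lb[OF A0] Abs_lb[OF B0] by simp
  then show "h_exp g lam Infty 1 = of_nat (2*g+1) / 2" using h A1 B1 by simp
qed



lemma lmul_agree:
  fixes f G G' :: "'a::comm_ring_1 lser"
  assumes "\<forall>m<a. f m = 0" "\<forall>m<c. G m = 0" "\<forall>m<c. G' m = 0" "\<forall>j\<le>k. G j = G' j" "l \<le> a + k"
  shows "lmul f G l = lmul f G' l"
  unfolding lmul_interval[OF assms(1,2)] lmul_interval[OF assms(1,3)]
  using assms(4,5) by (intro sum.cong) auto

lemma Lam_cases: "mu \<in> Lam g \<longleftrightarrow> mu = Infty \<or> (\<exists>i\<in>{1..2*g+1}. mu = Fin i)"
  unfolding Lam_def by auto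

lemma fst_unique:
  fixes G G' :: "pt \<Rightarrow> 'a::field_char_0 lser"
  assumes G: "G \<in> Bc absv g" and G': "G' \<in> Bc absv g"
    and E: "\<forall>mu l. dt mu (G mu) l = 0" and E': "\<forall>mu l. dt mu (G' mu) l = 0"
    and P: "\<forall>i\<in>{1..2*g+1}. G (Fin i) 0 = G' (Fin i) 0"
  shows "G = G'"
proof (intro ext)
  fix mu l
  show "G mu l = G' mu l"
  proof (cases "mu \<in> Lam g")
    case False then show ?thesis using G G' by (auto simp: Bc_def)
  next
    case True
    then consider "mu = Infty" | i where "i \<in> {1..2*g+1}" "mu = Fin i" unfolding Lam_cases by blast
    then show ?thesis
    proof cases
      case 1
      show ?thesis
      proof (cases "l = 0")
        case True then show ?thesis using G G' 1 by (auto simp: Bc_def)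
      next
        case False
        have "of_int l * G mu l = 0" "of_int l * G' mu l = 0"
          using E[rule_format, of mu "l+1"] E'[rule_format, of mu "l+1"] 1 by auto
        then show ?thesis using False by simp
      qed
    next
      case 2
      show ?thesis
      proof (cases "l = 0")
        case True then show ?thesis using P 2 by auto
      next
        case False
        have "of_int l * G mu l = 0" "of_int l * G' mu l = 0"
          using E[rule_format, of mu "l-1"] E'[rule_format, of mu "l-1"] 2 by auto
        then show ?thesis using False by simp
      qed
    qed
  qed
qed



lemma snd_unique:
  fixes G G' :: "pt \<Rightarrow> 'a::field_char_0 lser" and h :: "pt \<Rightarrow> 'a lser"
  assumes G: "G \<in> Bc absv g" and G': "G' \<in> Bc absv g"
    and E: "\<forall>mu l. dt mu (G mu) l + act g lam h G mu l = 0"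
    and E': "\<forall>mu l. dt mu (G' mu) l + act g lam h G' mu l = 0"
    and P: "\<forall>i\<in>{1..2*g+1}. G (Fin i) 0 = G' (Fin i) 0"
    and hf0: "\<forall>i\<in>{1..2*g+1}. \<forall>l< -1. h (Fin i) l = 0"
    and hf1: "\<forall>i\<in>{1..2*g+1}. h (Fin i) (-1) = 1/2"
    and hi0: "\<forall>l<1. h Infty l = 0"
    and hi1: "h Infty 1 = of_nat (2*g+1) / 2"
  shows "G = G'"
proof -
  have Gf: "\<forall>l<0. G (Fin i) l = 0" "\<forall>l<0. G' (Fin i) l = 0" if "i \<in> {1..2*g+1}" for i
    using G G' that by (auto simp: Bc_def)
  have Gi: "\<forall>l<1. G Infty l = 0" "\<forall>l<1. G' Infty l = 0"
    using G G' by (auto simp: Bc_def)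
  have prin_eq: "prin la (lmul (h la) (G la)) = prin la (lmul (h la) (G' la))" if la: "la \<in> Lam g" for la
  proof -
    consider "la = Infty" | i where "i \<in> {1..2*g+1}" "la = Fin i" using la unfolding Lam_cases by blast
    then show ?thesis
    proof cases
      case 1
      have "lmul (h la) (G la) l = lmul (h la) (G' la) l" if "l \<le> 0" for l
        using 1 that hi0 Gi by (intro lmul_agree[where a=1 and c=1 and k=0]) auto
      then show ?thesis using 1 by (auto simp: fun_eq_iff)
    next
      case 2
      have "lmul (h la) (G la) l = lmul (h la) (G' la) l" if "l < 0" for l
      proof (rule lmul_agree[where a="-1" and c=0 and k=0])
        show "\<forall>j\<le>0. G la j = G' la j"
        proof (intro allI impI)
          fix j :: int assume "j \<le> 0"
          then have "j < 0 \<or> j = 0" by auto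
          then show "G la j = G' la j" using Gf[OF 2(1)] P 2 by auto
        qed
      qed (use 2 that hf0 Gf in auto)
      then show ?thesis using 2 by (auto simp: fun_eq_iff)
    qed
  qed
  have loc: "dt mu (G mu) l + lmul (h mu) (G mu) l = dt mu (G' mu) l + lmul (h mu) (G' mu) l"
    if mu: "mu \<in> Lam g" for mu l
  proof -
    have s: "(\<Sum>la\<in>Lam g. pp_exp lam la mu (prin la (lmul (h la) (G la))) l)
          = (\<Sum>la\<in>Lam g. pp_exp lam la mu (prin la (lmul (h la) (G' la))) l)"
      using prin_eq by (intro sum.cong) auto
    have "dt mu (G mu) l + act g lam h G mu l = dt mu (G' mu) l + act g lam h G' mu l"
      using E E' by simp
    then show ?thesis using mu s unfolding act_def by (simp add: algebra_simps)
  qed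
  show "G = G'"
  proof (intro ext)
    fix mu l
    show "G mu l = G' mu l"
    proof (cases "mu \<in> Lam g")
      case False then show ?thesis using G G' by (auto simp: Bc_def)
    next
      case True
      then consider "mu = Infty" | i where "i \<in> {1..2*g+1}" "mu = Fin i" unfolding Lam_cases by blast
      then show ?thesis
      proof cases
        case 1
        have IA: "G Infty (int n) = G' Infty (int n)" for n
        proof (induction n rule: less_induct)
          case (less n)
          show ?case
          proof (cases n)
            case 0 then show ?thesis using Gi by auto
          next
            case (Suc k)
            define N where "N = int n"
            have N1: "N \<ge> 1" using Suc N_def by simp
            have hi0': "\<forall>m<1. h Infty m = 0" using hi0 by simp
            have split: "lmul (h Infty) F (N+1) = h Infty 1 * F N + (\<Sum>m\<in>{2..N}. h Infty m * F (N + 1 - m))"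
              if F: "\<forall>m<1. F m = 0" for F
            proof -
              have "lmul (h Infty) F (N+1) = (\<Sum>m\<in>{1..N}. h Infty m * F (N + 1 - m))"
                using lmul_interval[OF hi0' F, of "N+1"] by simp
              also have "{1..N} = insert 1 {2..N}" using N1 by auto
              also have "(\<Sum>m\<in>insert 1 {2..N}. h Infty m * F (N + 1 - m))
                 = h Infty 1 * F N + (\<Sum>m\<in>{2..N}. h Infty m * F (N + 1 - m))"
                by (subst sum.insert) auto
              finally show ?thesis .
            qed
            have rest: "(\<Sum>m\<in>{2..N}. h Infty m * G Infty (N + 1 - m)) = (\<Sum>m\<in>{2..N}. h Infty m * G' Infty (N + 1 - m))"
            proof (intro sum.cong refl)
              fix m assume m: "m \<in> {2..N}"
              define j where "j = nat (N + 1 - m)"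
              have "int j = N + 1 - m" "j < n" using m N_def by (auto simp: j_def)
              then show "h Infty m * G Infty (N + 1 - m) = h Infty m * G' Infty (N + 1 - m)"
                using less[of j] by metis
            qed
            have eq: "dt Infty (G Infty) (N+1) + lmul (h Infty) (G Infty) (N+1)
                = dt Infty (G' Infty) (N+1) + lmul (h Infty) (G' Infty) (N+1)"
              using loc[of Infty "N+1"] by (simp add: Lam_def)
            have "(h Infty 1 - of_int N) * (G Infty N - G' Infty N) = 0"
              using eq split[OF Gi(1)] split[OF Gi(2)] rest
              by (simp add: algebra_simps)
            moreover have "h Infty 1 - of_int N \<noteq> (0::'a)"
              unfolding hi1
            proof
              assume "of_nat (2*g+1) / 2 - of_int N = (0::'a)"
              then have "(of_int (int (2*g+1) - 2 * N) :: 'a) = 0"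
                by (simp add: field_simps)
              then have "int (2*g+1) - 2 * N = 0" by (simp only: of_int_eq_0_iff)
              then show False by presburger
            qed
            ultimately show ?thesis using N_def by simp
          qed
        qed
        show ?thesis
        proof (cases "l < 1")
          case True then show ?thesis using Gi 1 by auto
        next
          case False
          then have "l = int (nat l)" by simp
          then show ?thesis using IA[of "nat l"] 1 by simp
        qed
      next
        case 2
        have hf0': "\<forall>m< -1. h (Fin i) m = 0" using hf0 2 by simp
        have IB: "G (Fin i) (int n) = G' (Fin i) (int n)" for n
        proof (induction n rule: less_induct)
          case (less n)
          show ?case
          proof (cases n)
            case 0 then show ?thesis using P 2 by auto
          next
            case (Suc k)
            define N where "N = int k"
            have N0: "N \<ge> 0" using N_def by simp
            have split: "lmul (h (Fin i)) F N = h (Fin i) (-1) * F (N+1) + (\<Sum>m\<in>{0..N}. h (Fin i) m * F (N - m))"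
              if F: "\<forall>m<0. F m = 0" for F
            proof -
              have "lmul (h (Fin i)) F N = (\<Sum>m\<in>{-1..N}. h (Fin i) m * F (N - m))"
                using lmul_interval[OF hf0' F, of N] by simp
              also have "{-1..N} = insert (-1) {0..N}" using N0 by auto
              also have "(\<Sum>m\<in>insert (-1) {0..N}. h (Fin i) m * F (N - m))
                 = h (Fin i) (-1) * F (N+1) + (\<Sum>m\<in>{0..N}. h (Fin i) m * F (N - m))"
                by (subst sum.insert) auto
              finally show ?thesis .
            qed
            have rest: "(\<Sum>m\<in>{0..N}. h (Fin i) m * G (Fin i) (N - m)) = (\<Sum>m\<in>{0..N}. h (Fin i) m * G' (Fin i) (N - m))"
            proof (intro sum.cong refl)
              fix m assume m: "m \<in> {0..N}"
              define j where "j = nat (N - m)"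
              have "int j = N - m" "j < n" using m N_def Suc by (auto simp: j_def)
              then show "h (Fin i) m * G (Fin i) (N - m) = h (Fin i) m * G' (Fin i) (N - m)"
                using less[of j] by metis
            qed
            have eq: "dt (Fin i) (G (Fin i)) N + lmul (h (Fin i)) (G (Fin i)) N
                = dt (Fin i) (G' (Fin i)) N + lmul (h (Fin i)) (G' (Fin i)) N"
              using loc[of "Fin i"] 2 by (simp add: Lam_def)
            have "(of_int (N+1) + h (Fin i) (-1)) * (G (Fin i) (N+1) - G' (Fin i) (N+1)) = 0"
              using eq split[OF Gf(1)[OF 2(1)]] split[OF Gf(2)[OF 2(1)]] rest
              by (simp add: algebra_simps)
            moreover have "of_int (N+1) + h (Fin i) (-1) \<noteq> (0::'a)"
              unfolding hf1[rule_format, OF 2(1)]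
            proof
              assume "of_int (N+1) + 1/2 = (0::'a)"
              then have "(of_int (2 * N + 3) :: 'a) = 0"
                by (simp add: field_simps)
              then have "2 * N + 3 = 0" by (simp only: of_int_eq_0_iff)
              then show False using N0 by simp
            qed
            ultimately show ?thesis using N_def Suc by (simp add: add.commute)
          qed
        qed
        show ?thesis
        proof (cases "l < 0")
          case True then show ?thesis using Gf[OF 2(1)] 2 by auto
        next
          case False
          then have "l = int (nat l)" by simp
          then show ?thesis using IB[of "nat l"] 2 by simp
        qed
      qed
    qed
  qed
qed


theorem mainTheorem3:
  fixes p :: nat and absv :: "'a::field_char_0 \<Rightarrow> real"
    and g :: nat and lam :: "nat \<Rightarrow> 'a"
  assumes "padic_setting p absv"
    and "g \<ge> 1"
    and "\<forall>i\<in>{1..2*g+1}. absv (lam i) \<le> 1"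
    and "\<forall>i\<in>{1..2*g+1}. \<forall>j\<in>{1..2*g+1}. i \<noteq> j \<longrightarrow> \<not> absv (lam i - lam j) < 1"
  shows "inj_on (Phi g) (Hc absv g lam)"
proof (rule inj_onI)
  fix m m' assume m: "m \<in> Hc absv g lam" and m': "m' \<in> Hc absv g lam"
    and eqP: "Phi g m = Phi g m'"
  have D: "\<forall>i\<in>{1..2*g+1}. \<forall>j\<in>{1..2*g+1}. i \<noteq> j \<longrightarrow> lam i \<noteq> lam j"
  proof (intro ballI impI notI)
    fix i j assume i: "i \<in> {1..2*g+1}" and j: "j \<in> {1..2*g+1}" and ij: "i \<noteq> j" and e: "lam i = lam j"
    have "absv (lam i - lam j) = 0" using assms(1) e by (simp add: padic_setting_def)
    then show False using assms(4) i j ij by fastforce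
  qed
  have P: "fst m (Fin i) 0 = fst m' (Fin i) 0 \<and> snd m (Fin i) 0 = snd m' (Fin i) 0"
    if i: "i \<in> {1..2*g+1}" for i
    using fun_cong[OF eqP, of i] i by (simp add: Phi_def)
  have Bm: "fst m \<in> Bc absv g" "snd m \<in> Bc absv g" "nabla_c g lam m = ((\<lambda>_ _. 0), (\<lambda>_ _. 0))"
    using m by (auto simp: Hc_def)
  have Bm': "fst m' \<in> Bc absv g" "snd m' \<in> Bc absv g" "nabla_c g lam m' = ((\<lambda>_ _. 0), (\<lambda>_ _. 0))"
    using m' by (auto simp: Hc_def)
  have E1: "\<forall>mu l. dt mu (fst m mu) l = 0"
    "\<forall>mu l. dt mu (snd m mu) l + act g lam (h_exp g lam) (snd m) mu l = 0"
    using Bm(3) unfolding nabla_c_def by (auto simp: fun_eq_iff)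
  have E2: "\<forall>mu l. dt mu (fst m' mu) l = 0"
    "\<forall>mu l. dt mu (snd m' mu) l + act g lam (h_exp g lam) (snd m') mu l = 0"
    using Bm'(3) unfolding nabla_c_def by (auto simp: fun_eq_iff)
  have "fst m = fst m'"
    by (rule fst_unique[OF Bm(1) Bm'(1) E1(1) E2(1)]) (use P in auto)
  moreover have "snd m = snd m'"
  proof (rule snd_unique[OF Bm(2) Bm'(2) E1(2) E2(2)])
    show "\<forall>i\<in>{1..2*g+1}. snd m (Fin i) 0 = snd m' (Fin i) 0" using P by auto
    show "\<forall>i\<in>{1..2*g+1}. \<forall>l< -1. h_exp g lam (Fin i) l = 0" using h_fin(1)[OF D] by blast
    show "\<forall>i\<in>{1..2*g+1}. h_exp g lam (Fin i) (-1) = 1/2" using h_fin(2)[OF D] by blast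
    show "\<forall>l<1. h_exp g lam Infty l = 0" by (rule h_inf(1))
    show "h_exp g lam Infty 1 = of_nat (2*g+1) / 2" by (rule h_inf(2))
  qed
  ultimately show "m = m'" by (simp add: prod_eq_iff)
qed

end
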